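(* Let $X$ be a compact metric space with metric $d$, let $f:X\to X$ be continuous, and let $\delta>0$. If $C\subset X$ is a countable Li-Yorke chaotic set (resp. Li-Yorke $\delta$-chaotic set), then there exists a strictly increasing sequence $Q$ of positive integers such that $C$ is a distributional chaotic set in the sequence $Q$ (resp. a distributional $\delta$-chaotic set in the sequence $Q$).
   Context: Let $\Delta=\{(x,x):x\in X\}$. A pair $(x,y)$ is a Li-Yorke scrambled pair if $\liminf_{n\to\infty}d(f^n x,f^n y)=0$ and $\limsup_{n\to\infty}d(f^nx,f^ny)>0$; it is a Li-Yorke $\delta$-scrambled pair if $\liminf_{n\to\infty}d(f^n x,f^n y)=0$ and $\limsup_{n\to\infty}d(f^nx,f^ny)>\delta$. A set $C$ is Li-Yorke chaotic (resp. Li-Yorke $\delta$-chaotic) if every $(x,y)\in C\times C\setminus\Delta$ is a Li-Yorke scrambled pair (resp. Li-Yorke $\delta$-scrambled pair). For a strictly increasing sequence $Q=\{m_i\}$ of positive integers, $x,y\in X$, $t>0$, $n\ge 1$, put $\Phi^n_{(xy,Q)}(t)=\frac1n\#\{1\le i\le n: d(f^{m_i}(x),f^{m_i}(y))\le t\}$, $\Phi_{(xy,Q)}(t)=\liminf_{n}\Phi^n_{(xy,Q)}(t)$, $\Phi^\star_{(xy,Q)}(t)=\limsup_n\Phi^n_{(xy,Q)}(t)$. A pair $(x,y)$ is a distributional scrambled pair in $Q$ if $\Phi^\star_{(xy,Q)}(t)=1$ for all $t>0$ and $\Phi_{(xy,Q)}(s)=0$ for some $s>0$; it is a distributional $\delta$-scrambled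 pair in $Q$ if $\Phi^\star_{(xy,Q)}(t)=1$ for all $t>0$ and $\Phi_{(xy,Q)}(\delta)=0$. A set $D$ is a distributional chaotic set (resp. distributional $\delta$-chaotic set) in $Q$ if every $(x,y)\in D\times D\setminus\Delta$ is a distributional scrambled pair (resp. distributional $\delta$-scrambled pair) in $Q$. *)

theory Defs
  imports "HOL-Analysis.Analysis" "HOL-Library.Liminf_Limsup"
begin

definition LY_pair :: "('a::metric_space \<Rightarrow> 'a) \<Rightarrow> 'a \<Rightarrow> 'a \<Rightarrow> bool" where
  "LY_pair f x y \<longleftrightarrow>
     liminf (\<lambda>n. ereal (dist ((f ^^ n) x) ((f ^^ n) y))) = 0 \<and>
     limsup (\<lambda>n. ereal (dist ((f ^^ n) x) ((f ^^ n) y))) > 0"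

definition LY_delta_pair :: "('a::metric_space \<Rightarrow> 'a) \<Rightarrow> real \<Rightarrow> 'a \<Rightarrow> 'a \<Rightarrow> bool" where
  "LY_delta_pair f \<delta> x y \<longleftrightarrow>
     liminf (\<lambda>n. ereal (dist ((f ^^ n) x) ((f ^^ n) y))) = 0 \<and>
     limsup (\<lambda>n. ereal (dist ((f ^^ n) x) ((f ^^ n) y))) > ereal \<delta>"

definition LY_chaotic :: "('a::metric_space \<Rightarrow> 'a) \<Rightarrow> 'a set \<Rightarrow> bool" where
  "LY_chaotic f C \<longleftrightarrow> (\<forall>x\<in>C. \<forall>y\<in>C. x \<noteq> y \<longrightarrow> LY_pair f x y)"

definition LY_delta_chaotic :: "('a::metric_space \<Rightarrow> 'a) \<Rightarrow> real \<Rightarrow> 'a set \<Rightarrow> bool" where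
  "LY_delta_chaotic f \<delta> C \<longleftrightarrow> (\<forall>x\<in>C. \<forall>y\<in>C. x \<noteq> y \<longrightarrow> LY_delta_pair f \<delta> x y)"

text \<open>Q is a strictly increasing sequence of positive integers m_1 < m_2 < ...,
  represented as Q :: nat \<Rightarrow> nat with m_i = Q i for i \<ge> 1 (Q 0 is unused).\<close>

definition Phi_n :: "('a::metric_space \<Rightarrow> 'a) \<Rightarrow> (nat \<Rightarrow> nat) \<Rightarrow> 'a \<Rightarrow> 'a \<Rightarrow> real \<Rightarrow> nat \<Rightarrow> real" where
  "Phi_n f Q x y t n =
     real (card {i \<in> {1..n}. dist ((f ^^ Q i) x) ((f ^^ Q i) y) \<le> t}) / real n"

definition Phi_lower :: "('a::metric_space \<Rightarrow> 'a) \<Rightarrow> (nat \<Rightarrow> nat) \<Rightarrow> 'a \<Rightarrow> 'a \<Rightarrow> real \<Rightarrow> ereal" where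
  "Phi_lower f Q x y t = liminf (\<lambda>n. ereal (Phi_n f Q x y t n))"

definition Phi_upper :: "('a::metric_space \<Rightarrow> 'a) \<Rightarrow> (nat \<Rightarrow> nat) \<Rightarrow> 'a \<Rightarrow> 'a \<Rightarrow> real \<Rightarrow> ereal" where
  "Phi_upper f Q x y t = limsup (\<lambda>n. ereal (Phi_n f Q x y t n))"

definition distr_pair :: "('a::metric_space \<Rightarrow> 'a) \<Rightarrow> (nat \<Rightarrow> nat) \<Rightarrow> 'a \<Rightarrow> 'a \<Rightarrow> bool" where
  "distr_pair f Q x y \<longleftrightarrow>
     (\<forall>t>0. Phi_upper f Q x y t = 1) \<and> (\<exists>s>0. Phi_lower f Q x y s = 0)"

definition distr_delta_pair :: "('a::metric_space \<Rightarrow> 'a) \<Rightarrow> real \<Rightarrow> (nat \<Rightarrow> nat) \<Rightarrow> 'a \<Rightarrow> 'a \<Rightarrow> bool" where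
  "distr_delta_pair f \<delta> Q x y \<longleftrightarrow>
     (\<forall>t>0. Phi_upper f Q x y t = 1) \<and> Phi_lower f Q x y \<delta> = 0"

definition distr_chaotic :: "('a::metric_space \<Rightarrow> 'a) \<Rightarrow> (nat \<Rightarrow> nat) \<Rightarrow> 'a set \<Rightarrow> bool" where
  "distr_chaotic f Q D \<longleftrightarrow> (\<forall>x\<in>D. \<forall>y\<in>D. x \<noteq> y \<longrightarrow> distr_pair f Q x y)"

definition distr_delta_chaotic :: "('a::metric_space \<Rightarrow> 'a) \<Rightarrow> real \<Rightarrow> (nat \<Rightarrow> nat) \<Rightarrow> 'a set \<Rightarrow> bool" where
  "distr_delta_chaotic f \<delta> Q D \<longleftrightarrow> (\<forall>x\<in>D. \<forall>y\<in>D. x \<noteq> y \<longrightarrow> distr_delta_pair f \<delta> Q x y)"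

definition pos_strict_seq :: "(nat \<Rightarrow> nat) \<Rightarrow> bool" where
  "pos_strict_seq Q \<longleftrightarrow> strict_mono_on {1..} Q \<and> (\<forall>i\<ge>1. Q i > 0)"

end

theory Submission
  imports Defs "HOL-Library.Nat_Bijection"
begin

definition blk :: "nat \<Rightarrow> nat" where
  "blk i = (LEAST k. i \<le> (fact (Suc k) :: nat))"

primrec QQ :: "(nat \<Rightarrow> nat \<Rightarrow> bool) \<Rightarrow> nat \<Rightarrow> nat" where
  "QQ g 0 = 0"
| "QQ g (Suc i) = (LEAST n. QQ g i < n \<and> g (blk (Suc i)) n)"

definition goodk :: "(nat \<Rightarrow> nat \<Rightarrow> real) \<Rightarrow> (nat \<Rightarrow> real) \<Rightarrow> nat \<Rightarrow> nat \<Rightarrow> bool" where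
  "goodk D s k n = (let c = fst (prod_decode k) in
     if even c then D (c div 2) n \<le> 1 / (real k + 1) else D (c div 2) n > s (c div 2))"

lemma blk_eq:
  assumes "(fact k :: nat) < i" "i \<le> (fact (Suc k) :: nat)"
  shows "blk i = k"
  unfolding blk_def
proof (rule Least_equality)
  show "i \<le> fact (Suc k)" by fact
next
  fix y assume y: "i \<le> (fact (Suc y) :: nat)"
  show "k \<le> y"
  proof (rule ccontr)
    assume "\<not> k \<le> y"
    then have "Suc y \<le> k" by simp
    then have "(fact (Suc y) :: nat) \<le> fact k" by (rule fact_mono_nat)
    with y assms(1) show False by simp
  qed
qed

lemma QQ_props:
  assumes h: "\<forall>k N. \<exists>n>N. g k n"
  shows "QQ g i < QQ g (Suc i) \<and> g (blk (Suc i)) (QQ g (Suc i))"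
proof -
  obtain n where "QQ g i < n \<and> g (blk (Suc i)) n" using h by blast
  then have "QQ g i < (LEAST n. QQ g i < n \<and> g (blk (Suc i)) n) \<and>
      g (blk (Suc i)) (LEAST n. QQ g i < n \<and> g (blk (Suc i)) n)"
    by (rule LeastI)
  then show ?thesis by simp
qed

lemma QQ_mono:
  assumes h: "\<forall>k N. \<exists>n>N. g k n"
  shows "strict_mono (QQ g)"
proof (rule strict_monoI_Suc)
  fix i show "QQ g i < QQ g (Suc i)" using QQ_props[OF h] by blast
qed

lemma QQ_good:
  assumes h: "\<forall>k N. \<exists>n>N. g k n"
    and "(fact k :: nat) < i" "i \<le> (fact (Suc k) :: nat)"
  shows "g k (QQ g i)"
proof -
  have "i \<noteq> 0" using assms(2) by (metis fact_gt_zero not_less0 gr_zeroI less_trans)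
  then obtain j where j: "i = Suc j" by (cases i) auto
  show ?thesis using QQ_props[OF h, where i=j] blk_eq[OF assms(2,3)] j by simp
qed

lemma card_block: "card {(fact k :: nat)<..fact (Suc k)} = k * fact k"
  by simp

lemma main_comb:
  fixes D :: "nat \<Rightarrow> nat \<Rightarrow> real" and s :: "nat \<Rightarrow> real"
  assumes close: "\<And>p e N. e > 0 \<Longrightarrow> \<exists>n\<ge>N. D p n \<le> e"
    and far: "\<And>p N. \<exists>n\<ge>N. D p n > s p"
  shows "\<exists>Q. strict_mono Q \<and>
    (\<forall>p t r N. t > 0 \<longrightarrow> r < 1 \<longrightarrow> (\<exists>n\<ge>N.
        real (card {i \<in> {1..n}. D p (Q i) \<le> t}) / real n \<ge> r)) \<and>
    (\<forall>p r N. r > 0 \<longrightarrow> (\<exists>n\<ge>N.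
        real (card {i \<in> {1..n}. D p (Q i) \<le> s p}) / real n \<le> r))"
proof -
  define g where "g = goodk D s"
  have h: "\<exists>n>N. g k n" for k N
  proof -
    define c where "c = fst (prod_decode k)"
    show ?thesis
    proof (cases "even c")
      case True
      obtain n where "n \<ge> Suc N" "D (c div 2) n \<le> 1 / (real k + 1)"
        using close[of "1 / (real k + 1)" "Suc N" "c div 2"] by auto
      then show ?thesis using True by (auto simp: g_def goodk_def c_def[symmetric] Let_def intro!: exI[of _ n])
    next
      case False
      obtain n where "n \<ge> Suc N" "D (c div 2) n > s (c div 2)"
        using far[where p="c div 2" and N="Suc N"] by auto
      then show ?thesis using False by (auto simp: g_def goodk_def c_def[symmetric] Let_def intro!: exI[of _ n])
    qed
  qed
  have h: "\<forall>k N. \<exists>n>N. g k n" using h by blast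
  define Q where "Q = QQ g"
  have sm: "strict_mono Q" unfolding Q_def by (rule QQ_mono[OF h])
  have gd: "g k (Q i)" if "(fact k :: nat) < i" "i \<le> fact (Suc k)" for k i
    unfolding Q_def by (rule QQ_good[OF h that])
  have fpos: "(0::real) < real (fact k :: nat)" for k by simp
  have P1: "\<exists>n\<ge>N. real (card {i \<in> {1..n}. D p (Q i) \<le> t}) / real n \<ge> r"
    if t: "t > 0" and r: "r < 1" for p t r N
  proof -
    define e where "e = min t (1 - r)"
    have e: "e > 0" using t r by (simp add: e_def)
    obtain m0 :: nat where m0: "1 / e < real m0" using reals_Archimedean2 by blast
    define m where "m = max m0 N"
    define k where "k = prod_encode (2 * p, m)"
    have km: "m \<le> k" unfolding k_def by (rule le_prod_encode_2)
    have dec: "prod_decode k = (2 * p, m)" unfolding k_def by simp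
    have "1 / e < real k" using m0 km unfolding m_def by linarith
    then have "1 < real k * e" using e by (simp add: pos_divide_less_eq)
    moreover have "e * (real k + 1) = real k * e + e" by (simp add: algebra_simps)
    ultimately have "1 \<le> e * (real k + 1)" using e by linarith
    then have ke: "1 / (real k + 1) \<le> e" by (simp add: pos_divide_le_eq)
    define n where "n = (fact (Suc k) :: nat)"
    have "N \<le> k" using km unfolding m_def by simp
    also have "k \<le> n" unfolding n_def using fact_ge_self[of "Suc k"] by linarith
    finally have Nn: "N \<le> n" .
    have sub: "{(fact k :: nat)<..fact (Suc k)} \<subseteq> {i \<in> {1..n}. D p (Q i) \<le> t}"
    proof
      fix i assume i: "i \<in> {(fact k :: nat)<..fact (Suc k)}"
      then have "g k (Q i)" using gd by auto
      then have "D p (Q i) \<le> 1 / (real k + 1)" by (simp add: g_def goodk_def dec)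
      also have "\<dots> \<le> t" using ke e_def by linarith
      finally show "i \<in> {i \<in> {1..n}. D p (Q i) \<le> t}" using i n_def
        by auto
    qed
    have "k * fact k \<le> card {i \<in> {1..n}. D p (Q i) \<le> t}"
    proof -
      have "finite {i \<in> {1..n}. D p (Q i) \<le> t}" by simp
      from card_mono[OF this sub] show ?thesis using card_block[of k] by simp
    qed
    then have c1: "real k * real (fact k) \<le> real (card {i \<in> {1..n}. D p (Q i) \<le> t})"
      by (simp only: of_nat_mult[symmetric] of_nat_le_iff)
    have rn: "real n = (real k + 1) * real (fact k)" unfolding n_def by (simp add: algebra_simps)
    have "r \<le> real k / (real k + 1)"
    proof -
      have "1 - r \<ge> 1 / (real k + 1)" using ke e_def by linarith
      moreover have "real k / (real k + 1) = 1 - 1 / (real k + 1)" by (simp add: field_simps)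
      ultimately show ?thesis by linarith
    qed
    also have "\<dots> = real k * real (fact k) / real n" unfolding rn using fpos[of k] by simp
    also have "\<dots> \<le> real (card {i \<in> {1..n}. D p (Q i) \<le> t}) / real n"
      using c1 rn fpos[of k] by (intro divide_right_mono) auto
    finally show ?thesis using Nn by blast
  qed
  have P2: "\<exists>n\<ge>N. real (card {i \<in> {1..n}. D p (Q i) \<le> s p}) / real n \<le> r"
    if r: "r > 0" for p r N
  proof -
    obtain m0 :: nat where m0: "1 / r < real m0" using reals_Archimedean2 by blast
    define m where "m = max m0 N"
    define k where "k = prod_encode (2 * p + 1, m)"
    have km: "m \<le> k" unfolding k_def by (rule le_prod_encode_2)
    have dec: "prod_decode k = (2 * p + 1, m)" unfolding k_def by simp
    have "1 / r < real k" using m0 km unfolding m_def by linarith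
    then have "1 < real k * r" using r by (simp add: pos_divide_less_eq)
    moreover have "r * (real k + 1) = real k * r + r" by (simp add: algebra_simps)
    ultimately have "1 \<le> r * (real k + 1)" using r by linarith
    then have ke: "1 / (real k + 1) \<le> r" by (simp add: pos_divide_le_eq)
    define n where "n = (fact (Suc k) :: nat)"
    have "N \<le> k" using km unfolding m_def by simp
    also have "k \<le> n" unfolding n_def using fact_ge_self[of "Suc k"] by linarith
    finally have Nn: "N \<le> n" .
    have sub: "{i \<in> {1..n}. D p (Q i) \<le> s p} \<subseteq> {1..(fact k :: nat)}"
    proof
      fix i assume i: "i \<in> {i \<in> {1..n}. D p (Q i) \<le> s p}"
      show "i \<in> {1..(fact k :: nat)}"
      proof (rule ccontr)
        assume "i \<notin> {1..(fact k :: nat)}"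
        then have "fact k < i" "i \<le> fact (Suc k)" using i n_def by auto
        then have "g k (Q i)" using gd by auto
        then have "D p (Q i) > s p" by (simp add: g_def goodk_def dec)
        with i show False by auto
      qed
    qed
    have c0: "card {i \<in> {1..n}. D p (Q i) \<le> s p} \<le> fact k"
      using card_mono[OF _ sub] by auto
    have c1: "real (card {i \<in> {1..n}. D p (Q i) \<le> s p}) \<le> real (fact k)"
      using c0 by (simp only: of_nat_le_iff)
    have rn: "real n = (real k + 1) * real (fact k)" unfolding n_def by (simp add: algebra_simps)
    have "real (card {i \<in> {1..n}. D p (Q i) \<le> s p}) / real n \<le> real (fact k) / real n"
      using c1 rn fpos[of k] by (intro divide_right_mono) auto
    also have "\<dots> = 1 / (real k + 1)" unfolding rn using fpos[of k] by simp
    also have "\<dots> \<le> r" by fact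
    finally show ?thesis using Nn by blast
  qed
  show ?thesis using sm P1 P2 by blast
qed

lemma limsup_one:
  fixes u :: "nat \<Rightarrow> real"
  assumes "\<And>r N. r < 1 \<Longrightarrow> \<exists>n\<ge>N. u n \<ge> r" and "\<And>n. u n \<le> 1"
  shows "limsup (\<lambda>n. ereal (u n)) = 1"
proof (rule antisym)
  show "limsup (\<lambda>n. ereal (u n)) \<le> 1"
    by (rule Limsup_bounded) (use assms(2) in auto)
  show "1 \<le> limsup (\<lambda>n. ereal (u n))"
  proof (rule ccontr)
    assume "\<not> 1 \<le> limsup (\<lambda>n. ereal (u n))"
    then obtain z where z: "limsup (\<lambda>n. ereal (u n)) < ereal z" "ereal z < 1"
      using ereal_dense2 by (meson not_le)
    have "eventually (\<lambda>n. ereal (u n) < ereal z) sequentially" using z(1) by (rule Limsup_lessD)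
    then obtain N where "\<forall>n\<ge>N. u n < z" by (auto simp: eventually_sequentially)
    moreover obtain n where "n \<ge> N" "u n \<ge> z" using assms(1)[of z N] z(2) by auto
    ultimately show False by auto
  qed
qed

lemma liminf_zero:
  fixes u :: "nat \<Rightarrow> real"
  assumes "\<And>r N. r > 0 \<Longrightarrow> \<exists>n\<ge>N. u n \<le> r" and "\<And>n. u n \<ge> 0"
  shows "liminf (\<lambda>n. ereal (u n)) = 0"
proof (rule antisym)
  show "0 \<le> liminf (\<lambda>n. ereal (u n))"
    by (rule Liminf_bounded) (use assms(2) in auto)
  show "liminf (\<lambda>n. ereal (u n)) \<le> 0"
  proof (rule ccontr)
    assume "\<not> liminf (\<lambda>n. ereal (u n)) \<le> 0"
    then obtain z where z: "0 < ereal z" "ereal z < liminf (\<lambda>n. ereal (u n))"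
      using ereal_dense2 by (meson not_le)
    have "eventually (\<lambda>n. ereal (u n) > ereal z) sequentially" using z(2) by (rule less_LiminfD)
    then obtain N where "\<forall>n\<ge>N. u n > z" by (auto simp: eventually_sequentially)
    moreover obtain n where "n \<ge> N" "u n \<le> z" using assms(1)[of z N] z(1) by auto
    ultimately show False by auto
  qed
qed

lemma liminf0_close:
  fixes D :: "nat \<Rightarrow> real"
  assumes "liminf (\<lambda>n. ereal (D n)) = 0" "e > 0"
  shows "\<exists>n\<ge>N. D n \<le> e"
proof (rule ccontr)
  assume "\<not> ?thesis"
  then have "eventually (\<lambda>n. ereal e \<le> ereal (D n)) sequentially"
    by (auto simp: eventually_sequentially intro!: exI[of _ N])
  then have "ereal e \<le> liminf (\<lambda>n. ereal (D n))" by (rule Liminf_bounded)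
  with assms show False by simp
qed

lemma limsup_far:
  fixes D :: "nat \<Rightarrow> real"
  assumes "limsup (\<lambda>n. ereal (D n)) > ereal s"
  shows "\<exists>n\<ge>N. D n > s"
proof (rule ccontr)
  assume "\<not> ?thesis"
  then have "eventually (\<lambda>n. ereal (D n) \<le> ereal s) sequentially"
    by (auto simp: eventually_sequentially intro!: exI[of _ N])
  then have "limsup (\<lambda>n. ereal (D n)) \<le> ereal s" by (rule Limsup_bounded)
  with assms show False by simp
qed

lemma Phi_n_le1: "Phi_n f Q x y t n \<le> 1"
proof -
  have "card {i \<in> {1..n}. dist ((f ^^ Q i) x) ((f ^^ Q i) y) \<le> t} \<le> card {1..n}"
    by (rule card_mono) auto
  then show ?thesis unfolding Phi_n_def by (cases "n = 0") (auto simp: divide_simps)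
qed

lemma Phi_n_ge0: "Phi_n f Q x y t n \<ge> 0"
  unfolding Phi_n_def by simp

lemma general:
  fixes f :: "'a::metric_space \<Rightarrow> 'a" and C :: "'a set" and s :: "'a \<Rightarrow> 'a \<Rightarrow> real"
  assumes "countable C"
    and ly: "\<And>x y. x \<in> C \<Longrightarrow> y \<in> C \<Longrightarrow> x \<noteq> y \<Longrightarrow>
      liminf (\<lambda>n. ereal (dist ((f ^^ n) x) ((f ^^ n) y))) = 0 \<and>
      limsup (\<lambda>n. ereal (dist ((f ^^ n) x) ((f ^^ n) y))) > ereal (s x y)"
  shows "\<exists>Q. pos_strict_seq Q \<and> (\<forall>x\<in>C. \<forall>y\<in>C. x \<noteq> y \<longrightarrow>
     (\<forall>t>0. Phi_upper f Q x y t = 1) \<and> Phi_lower f Q x y (s x y) = 0)"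
proof -
  define P where "P = {(x, y). x \<in> C \<and> y \<in> C \<and> x \<noteq> y}"
  have psm: "pos_strict_seq Q" if "strict_mono Q" for Q :: "nat \<Rightarrow> nat"
    unfolding pos_strict_seq_def
  proof
    show "strict_mono_on {1..} Q" using that by (simp add: strict_mono_on_def strict_mono_def)
    show "\<forall>i\<ge>1. 0 < Q i"
    proof (intro allI impI)
      fix i :: nat assume "i \<ge> 1"
      then have "Q 0 < Q i" using strict_monoD[OF that] by simp
      then show "0 < Q i" by simp
    qed
  qed
  show ?thesis
  proof (cases "P = {}")
    case True
    then show ?thesis using psm[of id] by (auto simp: P_def strict_mono_def)
  next
    case False
    have cP: "countable P" unfolding P_def
      using countable_SIGMA[OF assms(1), of "\<lambda>_. C"]
      by (rule countable_subset[rotated]) (use assms(1) in auto)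
    define e where "e = from_nat_into P"
    have eP: "e p \<in> P" for p unfolding e_def using from_nat_into[OF False] .
    have surj: "\<exists>p. e p = q" if "q \<in> P" for q
      unfolding e_def using from_nat_into_surj[OF cP that] by metis
    define D where "D p n = dist ((f ^^ n) (fst (e p))) ((f ^^ n) (snd (e p)))" for p n
    define s' where "s' p = s (fst (e p)) (snd (e p))" for p
    have lyp: "liminf (\<lambda>n. ereal (D p n)) = 0 \<and> limsup (\<lambda>n. ereal (D p n)) > ereal (s' p)" for p
      using eP[of p] ly[of "fst (e p)" "snd (e p)"] unfolding D_def s'_def P_def
      by (auto simp: case_prod_beta)
    obtain Q where Q: "strict_mono Q"
      "\<forall>p t r N. t > 0 \<longrightarrow> r < 1 \<longrightarrow> (\<exists>n\<ge>N.
        real (card {i \<in> {1..n}. D p (Q i) \<le> t}) / real n \<ge> r)"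
      "\<forall>p r N. r > 0 \<longrightarrow> (\<exists>n\<ge>N.
        real (card {i \<in> {1..n}. D p (Q i) \<le> s' p}) / real n \<le> r)"
    proof -
      have cl: "\<exists>n\<ge>N. D p n \<le> e" if "e > 0" for p e N
        using liminf0_close[of "D p" e N] lyp[of p] that by blast
      have fr: "\<exists>n\<ge>N. D p n > s' p" for p N
        using limsup_far[of "s' p" "D p" N] lyp[of p] by blast
      show ?thesis using main_comb[of D s', OF cl fr] that by blast
    qed
    show ?thesis
    proof (intro exI conjI ballI impI allI)
      show "pos_strict_seq Q" using psm Q(1) by blast
    next
      fix x y t assume xy: "x \<in> C" "y \<in> C" "x \<noteq> y" and t: "(t::real) > 0"
      then obtain p where p: "e p = (x, y)" using surj[of "(x,y)"] by (auto simp: P_def)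
      have phi: "Phi_n f Q x y t n = real (card {i \<in> {1..n}. D p (Q i) \<le> t}) / real n" for n
        unfolding Phi_n_def D_def p by simp
      show "Phi_upper f Q x y t = 1" unfolding Phi_upper_def
        apply (rule limsup_one)
        subgoal for r N unfolding phi using Q(2) t by blast
        subgoal by (rule Phi_n_le1)
        done
    next
      fix x y assume xy: "x \<in> C" "y \<in> C" "x \<noteq> y"
      then obtain p where p: "e p = (x, y)" using surj[of "(x,y)"] by (auto simp: P_def)
      have sp: "s' p = s x y" unfolding s'_def p by simp
      have phi: "Phi_n f Q x y (s x y) n = real (card {i \<in> {1..n}. D p (Q i) \<le> s' p}) / real n" for n
        unfolding Phi_n_def D_def p sp by simp
      show "Phi_lower f Q x y (s x y) = 0" unfolding Phi_lower_def
        apply (rule liminf_zero)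
        subgoal for r N unfolding phi using Q(3) by blast
        subgoal by (rule Phi_n_ge0)
        done
    qed
  qed
qed

theorem theorem3p3:
  fixes f :: "'a::metric_space \<Rightarrow> 'a" and X C :: "'a set" and \<delta> :: real
  assumes "compact X" and "continuous_on X f" and "f ` X \<subseteq> X"
    and "\<delta> > 0" and "C \<subseteq> X" and "countable C"
  shows "(LY_chaotic f C \<longrightarrow> (\<exists>Q. pos_strict_seq Q \<and> distr_chaotic f Q C))
       \<and> (LY_delta_chaotic f \<delta> C \<longrightarrow> (\<exists>Q. pos_strict_seq Q \<and> distr_delta_chaotic f \<delta> Q C))"
proof (intro conjI impI)
  assume H: "LY_chaotic f C"
  define s where "s x y = (SOME z. 0 < ereal z \<and> ereal z < limsup (\<lambda>n. ereal (dist ((f ^^ n) x) ((f ^^ n) y))))" for x y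
  have s: "0 < s x y \<and> ereal (s x y) < limsup (\<lambda>n. ereal (dist ((f ^^ n) x) ((f ^^ n) y)))"
    if "x \<in> C" "y \<in> C" "x \<noteq> y" for x y
  proof -
    have "limsup (\<lambda>n. ereal (dist ((f ^^ n) x) ((f ^^ n) y))) > 0"
      using H that unfolding LY_chaotic_def LY_pair_def by blast
    then have "\<exists>z. 0 < ereal z \<and> ereal z < limsup (\<lambda>n. ereal (dist ((f ^^ n) x) ((f ^^ n) y)))"
      by (rule ereal_dense2)
    then have "0 < ereal (s x y) \<and> ereal (s x y) < limsup (\<lambda>n. ereal (dist ((f ^^ n) x) ((f ^^ n) y)))"
      unfolding s_def by (rule someI_ex)
    then show ?thesis by simp
  qed
  obtain Q where Q: "pos_strict_seq Q" "\<forall>x\<in>C. \<forall>y\<in>C. x \<noteq> y \<longrightarrow>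
     (\<forall>t>0. Phi_upper f Q x y t = 1) \<and> Phi_lower f Q x y (s x y) = 0"
    using general[of C f s] assms(6) H s unfolding LY_chaotic_def LY_pair_def by blast
  show "\<exists>Q. pos_strict_seq Q \<and> distr_chaotic f Q C"
    using Q s unfolding distr_chaotic_def distr_pair_def by blast
next
  assume H: "LY_delta_chaotic f \<delta> C"
  obtain Q where Q: "pos_strict_seq Q" "\<forall>x\<in>C. \<forall>y\<in>C. x \<noteq> y \<longrightarrow>
     (\<forall>t>0. Phi_upper f Q x y t = 1) \<and> Phi_lower f Q x y ((\<lambda>_ _. \<delta>) x y) = 0"
    using general[of C f "\<lambda>_ _. \<delta>"] assms(6) H unfolding LY_delta_chaotic_def LY_delta_pair_def by blast
  show "\<exists>Q. pos_strict_seq Q \<and> distr_delta_chaotic f \<delta> Q C"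
    using Q unfolding distr_delta_chaotic_def distr_delta_pair_def by auto
qed

end
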